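(* Let $1\le p<\infty$ and let $w=(w_n)_{n\in\mathbb{Z}}$ be a complex sequence. Assume $\ell^p_{a,b}(\Omega_{r,R})$ (respectively $c_{0,a,b}(\Omega_{r,R})$) contains all Laurent polynomials. If $B_w$ is a bounded operator on $\ell^p_{a,b}(\Omega_{r,R})$ (respectively $c_{0,a,b}(\Omega_{r,R})$), then the sequences $\left(\frac{w_{n+1}a_{n+1}}{a_n}\right)_{n\in\mathbb{Z}}$ and $(c_n)_{n\in\mathbb{Z}}$ are bounded, where $c_n=w_{n+1}\frac{b_n}{a_n}-w_n\frac{b_{n-1}}{a_{n-1}}$.
   Context: Let $a=(a_n)_{n\in\mathbb{Z}}$ and $b=(b_n)_{n\in\mathbb{Z}}$ be complex sequences with $a_n\ne0$ for all $n$ and $\sup_{n\le-1}\left|\frac{a_{n+1}a_{n+2}\cdots a_0}{b_nb_{n+1}\cdots b_{-1}}\right|=\infty$. Put $f_n(z)=(a_n+b_nz)z^n$. Let $r=\limsup_{n\to+\infty}(|a_{-n}|+|b_{-n}|)^{1/n}$ and $1/R=\limsup_{n\to+\infty}(|a_n|+|b_n|)^{1/n}$ (finite), assume $r<R$, and $\Omega_{r,R}=\{r<|z|<R\}$. $\ell^p_{a,b}(\Omega_{r,R})$ is the Banach space of analytic functions on $\Omega_{r,R}$ of the form $f=\sum_n\lambda_nf_n$ with $(\lambda_n)\in\ell^p(\mathbb{Z})$ (locally uniformly convergent, coefficients unique), norm $(\sum_n|\lambda_n|^p)^{1/p}$; $c_{0,a,b}(\Omega_{r,R})$ likewise with $(\lambda_n)\in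 c_0(\mathbb{Z})$ and sup norm. $B_w$ acts by $B_w(\sum_n\widehat f(n)z^n)=\sum_nw_n\widehat f(n)z^{n-1}$ on Laurent expansions; "bounded" means this defines a bounded operator on the space. *)

theory Defs
  imports "HOL-Analysis.Analysis"
begin

definition fblock :: "(int \<Rightarrow> complex) \<Rightarrow> (int \<Rightarrow> complex) \<Rightarrow> int \<Rightarrow> complex \<Rightarrow> complex" where
  "fblock a b n z = (a n + b n * z) * z powi n"

definition inner_rad :: "(int \<Rightarrow> complex) \<Rightarrow> (int \<Rightarrow> complex) \<Rightarrow> ereal" where
  "inner_rad a b = limsup (\<lambda>n::nat. ereal (root n (norm (a (- int n)) + norm (b (- int n)))))"

definition inv_outer_rad :: "(int \<Rightarrow> complex) \<Rightarrow> (int \<Rightarrow> complex) \<Rightarrow> ereal" where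
  "inv_outer_rad a b = limsup (\<lambda>n::nat. ereal (root n (norm (a (int n)) + norm (b (int n)))))"

definition outer_rad :: "(int \<Rightarrow> complex) \<Rightarrow> (int \<Rightarrow> complex) \<Rightarrow> ereal" where
  "outer_rad a b = inverse (inv_outer_rad a b)"

definition annulus :: "(int \<Rightarrow> complex) \<Rightarrow> (int \<Rightarrow> complex) \<Rightarrow> complex set" where
  "annulus a b = {z. inner_rad a b < ereal (norm z) \<and> ereal (norm z) < outer_rad a b}"

definition psum :: "(int \<Rightarrow> complex) \<Rightarrow> (int \<Rightarrow> complex) \<Rightarrow> (int \<Rightarrow> complex) \<Rightarrow> nat \<Rightarrow> complex \<Rightarrow> complex" where
  "psum a b lam N z = (\<Sum>n = - int N..int N. lam n * fblock a b n z)"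

definition series_fun :: "(int \<Rightarrow> complex) \<Rightarrow> (int \<Rightarrow> complex) \<Rightarrow> (int \<Rightarrow> complex) \<Rightarrow> complex \<Rightarrow> complex" where
  "series_fun a b lam z = lim (\<lambda>N. psum a b lam N z)"

definition loc_unif_conv :: "(int \<Rightarrow> complex) \<Rightarrow> (int \<Rightarrow> complex) \<Rightarrow> (int \<Rightarrow> complex) \<Rightarrow> bool" where
  "loc_unif_conv a b lam \<longleftrightarrow>
     (\<forall>K. compact K \<and> K \<subseteq> annulus a b \<longrightarrow>
        uniform_limit K (psum a b lam) (series_fun a b lam) sequentially)"

definition lp_coeffs :: "real \<Rightarrow> (int \<Rightarrow> complex) \<Rightarrow> (int \<Rightarrow> complex) \<Rightarrow> (int \<Rightarrow> complex) \<Rightarrow> bool" where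
  "lp_coeffs p a b lam \<longleftrightarrow> (\<lambda>n. norm (lam n) powr p) summable_on UNIV \<and> loc_unif_conv a b lam"

definition lp_norm :: "real \<Rightarrow> (int \<Rightarrow> complex) \<Rightarrow> real" where
  "lp_norm p lam = (\<Sum>\<^sub>\<infinity>n. norm (lam n) powr p) powr (1 / p)"

definition c0_coeffs :: "(int \<Rightarrow> complex) \<Rightarrow> (int \<Rightarrow> complex) \<Rightarrow> (int \<Rightarrow> complex) \<Rightarrow> bool" where
  "c0_coeffs a b lam \<longleftrightarrow> (lam \<longlongrightarrow> 0) at_top \<and> (lam \<longlongrightarrow> 0) at_bot \<and> loc_unif_conv a b lam"

definition sup_norm :: "(int \<Rightarrow> complex) \<Rightarrow> real" where
  "sup_norm lam = (SUP n. norm (lam n))"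

text \<open>Laurent coefficients of a function on an annulus (unique by the Laurent theorem).\<close>
definition laurent_coeff :: "complex set \<Rightarrow> (complex \<Rightarrow> complex) \<Rightarrow> int \<Rightarrow> complex" where
  "laurent_coeff \<Omega> f = (THE c. \<forall>z\<in>\<Omega>. ((\<lambda>k. c k * z powi k) has_sum f z) UNIV)"

text \<open>The space (given by its coefficient predicate S) contains all Laurent polynomials,
  equivalently all monomials z^m.\<close>
definition contains_laurent_polys ::
  "(int \<Rightarrow> complex) \<Rightarrow> (int \<Rightarrow> complex) \<Rightarrow> ((int \<Rightarrow> complex) \<Rightarrow> bool) \<Rightarrow> bool" where
  "contains_laurent_polys a b S \<longleftrightarrow>
     (\<forall>m::int. \<exists>lam. S lam \<and> (\<forall>z\<in>annulus a b. series_fun a b lam z = z powi m))"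

text \<open>B_w is a bounded operator on the space with coefficient predicate S and norm N:
  for every f in the space, the series sum_n w_n hat f(n) z^(n-1) converges on the annulus
  to an element of the space, with norm at most C times the norm of f.\<close>
definition Bw_bounded ::
  "(int \<Rightarrow> complex) \<Rightarrow> (int \<Rightarrow> complex) \<Rightarrow> ((int \<Rightarrow> complex) \<Rightarrow> bool) \<Rightarrow> ((int \<Rightarrow> complex) \<Rightarrow> real)
    \<Rightarrow> (int \<Rightarrow> complex) \<Rightarrow> bool" where
  "Bw_bounded a b S N w \<longleftrightarrow>
     (\<exists>C. \<forall>lam. S lam \<longrightarrow>
        (\<exists>mu. S mu \<and> N mu \<le> C * N lam \<and>
          (\<forall>z\<in>annulus a b.
             ((\<lambda>n. w n * laurent_coeff (annulus a b) (series_fun a b lam) n * z powi (n - 1))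
                has_sum series_fun a b mu z) UNIV)))"

end

theory Submission
  imports Defs "HOL-Complex_Analysis.Complex_Analysis"
begin

lemma has_sum_sym_partial:
  fixes f :: "int \<Rightarrow> 'a::{topological_comm_monoid_add}"
  assumes "(f has_sum S) UNIV"
  shows "(\<lambda>N. sum f {-int N..int N}) \<longlonglongrightarrow> S"
proof -
  have "filterlim (\<lambda>N::nat. {-int N..int N}) (finite_subsets_at_top UNIV) sequentially"
    unfolding filterlim_finite_subsets_at_top
  proof safe
    fix X :: "int set" assume "finite X"
    then obtain M where M: "\<And>x. x\<in>X \<Longrightarrow> \<bar>x\<bar> \<le> M"
      using finite_int_iff_bounded_le by blast
    show "\<forall>\<^sub>F y in sequentially. finite {- int y..int y} \<and> X \<subseteq> {- int y..int y} \<and> {- int y..int y} \<subseteq> UNIV"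
      using eventually_ge_at_top[of "nat M"] 
      by eventually_elim (auto dest!: M)
  qed
  then show ?thesis using assms unfolding has_sum_def by (rule filterlim_compose[rotated])
qed

lemma circ_int_powi:
  assumes "\<rho> > 0"
  shows "((\<lambda>z. z powi j) has_contour_integral (if j = -1 then 2*pi*\<i> else 0)) (circlepath 0 \<rho>)"
proof (cases "j = -1")
  case True
  have "((\<lambda>z. 1/(z - 0)) has_contour_integral (2*pi*\<i>*1)) (circlepath 0 \<rho>)"
    using Cauchy_integral_circlepath_simple[of "\<lambda>z. 1" 0 \<rho> 0] assms by simp
  then show ?thesis using True by (simp add: power_int_minus divide_inverse)
next
  case False
  have "((\<lambda>z. z powi j) has_contour_integral 0) (circlepath 0 \<rho>)"
  proof (rule Cauchy_theorem_primitive[where S="-{0}" and f="\<lambda>z. z powi (j+1) / of_int (j+1)"])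
    fix x :: complex assume "x \<in> -{0}"
    then have "((\<lambda>z. z powi (j+1) / of_int (j+1)) has_field_derivative
       (of_int (j+1) * x powi (j+1-1) * 1) / of_int (j+1)) (at x within -{0})"
      by (intro DERIV_cdivide DERIV_power_int DERIV_ident) auto
    moreover have "of_int (j+1) * x powi (j+1-1) * 1 / of_int (j+1) = x powi j"
    proof -
      have nz: "(of_int (j+1) :: complex) \<noteq> 0" using False by (simp only: of_int_eq_0_iff)
      show ?thesis using nz by simp
    qed
    ultimately show "((\<lambda>z. z powi (j+1) / of_int (j+1)) has_field_derivative x powi j) (at x within -{0})"
      by simp
  qed (use assms in auto)
  then show ?thesis using False by simp
qed

lemma laurent_unique0:
  fixes c :: "int \<Rightarrow> complex"
  assumes \<rho>: "\<rho> > 0" and h: "\<And>z. norm z = \<rho> \<Longrightarrow> ((\<lambda>k. c k * z powi k) has_sum 0) UNIV"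
  shows "c m = 0"
proof -
  define G where "G k = norm (c k) * \<rho> powi k" for k
  have nk: "norm (c k * z powi k) = G k" if "norm z = \<rho>" for k z
    using that by (simp add: G_def norm_mult norm_power_int)
  have "(\<lambda>k. c k * of_real \<rho> powi k) summable_on UNIV"
    using h[of "of_real \<rho>"] \<rho> by (auto simp: summable_on_def)
  hence "(\<lambda>k. norm (c k * of_real \<rho> powi k)) summable_on UNIV"
    by (simp add: summable_on_iff_abs_summable_on_complex)
  hence Gs: "G summable_on UNIV"
    using nk[of "of_real \<rho>"] \<rho> by simp
  define I where "I N = {-int N..int N}" for N
  have finI: "finite (I N)" for N by (simp add: I_def)
  have GI: "(\<lambda>N. sum G (I N)) \<longlonglongrightarrow> infsum G UNIV"
    unfolding I_def using has_sum_sym_partial Gs summable_iff_has_sum_infsum by blast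
  define F where "F N z = (\<Sum>k\<in>I N. c k * z powi (k - m - 1))" for N z
  define K where "K = \<rho> powi (-m-1)"
  have K: "K > 0" using \<rho> by (simp add: K_def)
  have bound: "norm (F N z) \<le> K * (infsum G UNIV - sum G (I N))" if "norm z = \<rho>" for N z
  proof -
    have z0: "z \<noteq> 0" using that \<rho> by auto
    have hs: "((\<lambda>k. c k * z powi k) has_sum 0) UNIV" using h that .
    have abs: "(\<lambda>k. norm (c k * z powi k)) summable_on UNIV"
      using Gs nk[OF that] by simp
    hence sC: "(\<lambda>k. c k * z powi k) summable_on (- I N)"
      using summable_on_iff_abs_summable_on_complex summable_on_subset_banach by blast
    have absC: "(\<lambda>k. norm (c k * z powi k)) summable_on (- I N)"
      using abs summable_on_subset_banach by blast
    have "((\<lambda>k. c k * z powi k) has_sum (sum (\<lambda>k. c k * z powi k) (I N) + infsum (\<lambda>k. c k * z powi k) (- I N))) (I N \<union> - I N)"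
      by (intro has_sum_Un_disjoint has_sum_finite finI) (use sC in auto)
    hence "sum (\<lambda>k. c k * z powi k) (I N) + infsum (\<lambda>k. c k * z powi k) (- I N) = 0"
      using hs has_sum_unique by (metis Compl_partition)
    hence e1: "sum (\<lambda>k. c k * z powi k) (I N) = - infsum (\<lambda>k. c k * z powi k) (- I N)"
      by (simp add: eq_neg_iff_add_eq_0)
    have "F N z = z powi (-m-1) * sum (\<lambda>k. c k * z powi k) (I N)"
      unfolding F_def sum_distrib_left
      by (rule sum.cong) (use z0 in \<open>auto simp: power_int_add[symmetric] algebra_simps\<close>)
    hence "norm (F N z) = K * norm (infsum (\<lambda>k. c k * z powi k) (- I N))"
      using that e1 by (simp add: norm_mult norm_power_int K_def)
    also have "\<dots> \<le> K * infsum (\<lambda>k. norm (c k * z powi k)) (- I N)"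
      using K norm_infsum_bound[OF absC] by simp
    also have "infsum (\<lambda>k. norm (c k * z powi k)) (- I N) = infsum G (- I N)"
      using nk[OF that] by simp
    also have "infsum G (- I N) = infsum G UNIV - sum G (I N)"
    proof -
      have "infsum G (I N \<union> - I N) = infsum G (I N) + infsum G (- I N)"
        by (intro infsum_Un_disjoint) (use Gs summable_on_subset_banach finI in auto)
      then show ?thesis using finI by (simp add: Compl_partition)
    qed
    finally show ?thesis .
  qed
  have ul: "uniform_limit (sphere 0 \<rho>) F (\<lambda>z. 0) sequentially"
    unfolding uniform_limit_iff
  proof (intro allI impI)
    fix e :: real assume e: "e > 0"
    have "\<forall>\<^sub>F N in sequentially. dist (sum G (I N)) (infsum G UNIV) < e / K"
      using GI e K by (auto simp: tendsto_iff)
    then show "\<forall>\<^sub>F N in sequentially. \<forall>z\<in>sphere 0 \<rho>. dist (F N z) 0 < e"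
    proof eventually_elim
      case (elim N)
      show ?case
      proof
        fix z :: complex assume "z \<in> sphere 0 \<rho>"
        then have "norm z = \<rho>" by simp
        then have "norm (F N z) \<le> K * (infsum G UNIV - sum G (I N))" by (rule bound)
        also have "\<dots> \<le> K * dist (sum G (I N)) (infsum G UNIV)"
          using K by (intro mult_left_mono) (auto simp: dist_real_def)
        also have "\<dots> < e" using elim K by (simp add: field_simps)
        finally show "dist (F N z) 0 < e" by simp
      qed
    qed
  qed
  have int: "(F N has_contour_integral (if m \<in> I N then c m * (2*pi*\<i>) else 0)) (circlepath 0 \<rho>)" for N
  proof -
    have "(F N has_contour_integral (\<Sum>k\<in>I N. c k * (if k - m - 1 = -1 then 2*pi*\<i> else 0))) (circlepath 0 \<rho>)"
      unfolding F_def
      by (intro has_contour_integral_sum finI has_contour_integral_lmul circ_int_powi \<rho>)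
    also have "(\<Sum>k\<in>I N. c k * (if k - m - 1 = -1 then 2*pi*\<i> else 0)) = (\<Sum>k\<in>I N. if k = m then c m * (2*pi*\<i>) else 0)"
      by (rule sum.cong) auto
    also have "\<dots> = (if m \<in> I N then c m * (2*pi*\<i>) else 0)"
      using finI by (simp add: sum.delta)
    finally show ?thesis .
  qed
  have lim: "(\<lambda>N. contour_integral (circlepath 0 \<rho>) (F N)) \<longlonglongrightarrow> contour_integral (circlepath 0 \<rho>) (\<lambda>z. 0)"
    by (rule contour_integral_uniform_limit_circlepath(2)[OF _ ul _ \<rho>]) (use int in \<open>auto intro!: always_eventually has_contour_integral_integrable\<close>)
  have ev: "\<forall>\<^sub>F N in sequentially. contour_integral (circlepath 0 \<rho>) (F N) = c m * (2*pi*\<i>)"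
    using eventually_ge_at_top[of "nat \<bar>m\<bar>"]
  proof eventually_elim
    case (elim N)
    then have "m \<in> I N" by (auto simp: I_def)
    then show ?case using int[of N] contour_integral_unique by fastforce
  qed
  have "(\<lambda>N. contour_integral (circlepath 0 \<rho>) (F N)) \<longlonglongrightarrow> c m * (2*pi*\<i>)"
    using ev by (rule tendsto_eventually)
  with lim have "c m * (2*pi*\<i>) = contour_integral (circlepath 0 \<rho>) (\<lambda>z. 0)"
    using LIMSEQ_unique by blast
  also have "\<dots> = 0" by simp
  finally show ?thesis by simp
qed

lemma inner_rad_nonneg: "inner_rad a b \<ge> 0"
  unfolding inner_rad_def
  by (rule le_Limsup) (auto simp: real_root_ge_zero)

lemma inv_outer_rad_nonneg: "inv_outer_rad a b \<ge> 0"
  unfolding inv_outer_rad_def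
  by (rule le_Limsup) (auto simp: real_root_ge_zero)

lemma annulus_nz: "z \<in> annulus a b \<Longrightarrow> z \<noteq> 0"
  using inner_rad_nonneg[of a b] unfolding annulus_def by (auto simp: zero_ereal_def)

lemma annulus_circle:
  assumes "inner_rad a b < outer_rad a b"
  obtains \<rho> where "\<rho> > 0" "\<And>z. norm z = \<rho> \<Longrightarrow> z \<in> annulus a b"
proof -
  obtain \<rho> where r: "inner_rad a b < ereal \<rho>" "ereal \<rho> < outer_rad a b"
    using ereal_dense2[OF assms] by blast
  have "ereal 0 < ereal \<rho>" using r(1) inner_rad_nonneg[of a b] zero_ereal_def by (metis order.strict_trans1)
  hence "\<rho> > 0" by simp
  then show ?thesis using r that by (auto simp: annulus_def)
qed

lemma root_geom_summable:
  fixes x :: "nat \<Rightarrow> real"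
  assumes x0: "\<And>n. x n \<ge> 0" and ls: "limsup (\<lambda>n. ereal (root n (x n))) < ereal q"
    and t: "t \<ge> 0" "q * t < 1"
  shows "summable (\<lambda>n. x n * t^n)"
proof -
  have ev: "eventually (\<lambda>n. root n (x n) < q) sequentially"
    using Limsup_lessD[OF ls] by simp
  then obtain n0 where "root n0 (x n0) < q" by (auto simp: eventually_sequentially)
  moreover have "root n0 (x n0) \<ge> 0" using x0 by (simp add: real_root_ge_zero)
  ultimately have q0: "q > 0" by linarith
  have ev2: "eventually (\<lambda>n. norm (x n * t^n) \<le> (q*t)^n) sequentially"
    using ev eventually_gt_at_top[of 0]
  proof eventually_elim
    case (elim n)
    have "x n = root n (x n) ^ n" using elim x0 by (simp add: real_root_pow_pos2)
    also have "\<dots> \<le> q ^ n" using elim x0 by (intro power_mono) (auto simp: real_root_ge_zero)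
    finally have xq: "x n \<le> q^n" .
    have "norm (x n * t^n) = x n * t^n" using x0 t by simp
    also have "\<dots> \<le> q^n * t^n" by (rule mult_right_mono) (use xq t in auto)
    also have "\<dots> = (q*t)^n" by (simp add: power_mult_distrib)
    finally show ?case .
  qed
  have "norm (q*t) < 1" using q0 t by simp
  then show ?thesis
    by (rule summable_comparison_test_ev[OF ev2 summable_geometric])
qed

lemma annulus_summable:
  assumes z: "z \<in> annulus a b" and fin: "inv_outer_rad a b \<noteq> \<infinity>"
  shows "(\<lambda>k. (norm (a k) + norm (b k)) * norm z powi k) summable_on UNIV"
proof -
  define g where "g k = (norm (a k) + norm (b k)) * norm z powi k" for k
  define t where "t = norm z"
  have t0: "t > 0" using annulus_nz[OF z] by (simp add: t_def)
  have pos: "g summable_on range int"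
  proof -
    obtain l where l: "inv_outer_rad a b = ereal l" "l \<ge> 0"
      using fin inv_outer_rad_nonneg[of a b] by (cases "inv_outer_rad a b") auto
    have tl: "ereal t < inverse (ereal l)" using z l by (simp add: annulus_def outer_rad_def t_def)
    have lt: "l * t < 1"
    proof (cases "l = 0")
      case False
      then have "t < 1 / l" using tl l by (simp add: inverse_eq_divide)
      then show ?thesis using False l t0 by (simp add: field_simps)
    qed simp
    define q where "q = (l + 1/t) / 2"
    have "l < q" using lt t0 by (simp add: q_def field_simps)
    hence ls: "limsup (\<lambda>n. ereal (root n (norm (a (int n)) + norm (b (int n))))) < ereal q"
      using l by (simp add: inv_outer_rad_def)
    have "q * t < 1" using lt t0 by (simp add: q_def field_simps)
    hence "summable (\<lambda>n. (norm (a (int n)) + norm (b (int n))) * t^n)"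
      using root_geom_summable[OF _ ls] t0 by simp
    hence "(\<lambda>n. (norm (a (int n)) + norm (b (int n))) * t^n) summable_on UNIV"
      by (intro summable_nonneg_imp_summable_on) (use t0 in auto)
    hence "(g \<circ> int) summable_on UNIV"
      by (simp add: g_def t_def o_def)
    then show ?thesis by (subst summable_on_reindex) (auto simp: inj_on_def)
  qed
  have neg: "g summable_on range (\<lambda>n. - int n)"
  proof -
    obtain r0 where r0: "inner_rad a b = ereal r0"
      using inner_rad_nonneg[of a b] z by (cases "inner_rad a b") (auto simp: annulus_def)
    have rt: "r0 < t" using z r0 by (simp add: annulus_def t_def)
    define q where "q = (r0 + t) / 2"
    have "r0 < q" using rt by (simp add: q_def)
    hence ls: "limsup (\<lambda>n. ereal (root n (norm (a (- int n)) + norm (b (- int n))))) < ereal q"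
      using r0 by (simp add: inner_rad_def)
    have "q * (1/t) < 1" using rt t0 by (simp add: q_def field_simps)
    hence "summable (\<lambda>n. (norm (a (- int n)) + norm (b (- int n))) * (1/t)^n)"
      using root_geom_summable[OF _ ls] t0 by simp
    hence "(\<lambda>n. (norm (a (- int n)) + norm (b (- int n))) * (1/t)^n) summable_on UNIV"
      by (intro summable_nonneg_imp_summable_on) (use t0 in auto)
    hence "(g \<circ> (\<lambda>n. - int n)) summable_on UNIV"
      by (simp add: g_def t_def o_def power_int_minus power_divide divide_inverse power_inverse)
    then show ?thesis by (subst summable_on_reindex) (auto simp: inj_on_def)
  qed
  have "k \<in> range int \<union> range (\<lambda>n. - int n)" for k :: int
  proof -
    show "k \<in> range int \<union> range (\<lambda>n. - int n)"
    proof (cases "k \<ge> 0")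
      case True then show ?thesis by (auto intro!: image_eqI[of _ _ "nat k"])
    next
      case False then show ?thesis by (auto intro!: image_eqI[of _ _ "nat (-k)"])
    qed
  qed
  then have "range int \<union> range (\<lambda>n. - int n) = (UNIV :: int set)" by blast
  then show ?thesis using summable_on_union[OF pos neg] by (simp add: g_def[abs_def])
qed

lemma series_coeffs:
  assumes z: "z \<in> annulus a b" and fin: "inv_outer_rad a b \<noteq> \<infinity>"
    and B: "\<And>k. norm (lam k) \<le> B"
  shows "((\<lambda>k. (lam k * a k + lam (k-1) * b (k-1)) * z powi k) has_sum series_fun a b lam z) UNIV"
proof -
  define g where "g k = (norm (a k) + norm (b k)) * norm z powi k" for k
  have gs: "g summable_on UNIV" using annulus_summable[OF z fin] by (simp add: g_def[abs_def])
  have z0: "z \<noteq> 0" using annulus_nz[OF z] .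
  have B0: "B \<ge> 0" using B[of 0] norm_ge_zero order_trans by blast
  define u where "u k = lam k * a k * z powi k" for k
  define v where "v k = lam k * b k * z powi (k+1)" for k
  have "(\<lambda>k. norm (u k)) summable_on UNIV"
  proof (rule summable_on_comparison_test)
    show "(\<lambda>k. B * g k) summable_on UNIV" using gs by (rule summable_on_cmult_right)
    fix k :: int
    have "norm (u k) = norm (lam k) * norm (a k) * norm z powi k"
      by (simp add: u_def norm_mult norm_power_int)
    also have "\<dots> \<le> B * (norm (a k) + norm (b k)) * norm z powi k"
      by (intro mult_right_mono mult_mono B) (use B0 in auto)
    finally show "norm (u k) \<le> B * g k" by (simp add: g_def mult.assoc)
  qed auto
  then obtain U where U: "(u has_sum U) UNIV"
    using summable_on_iff_abs_summable_on_complex summable_on_def by blast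
  have "(\<lambda>k. norm (v k)) summable_on UNIV"
  proof (rule summable_on_comparison_test)
    show "(\<lambda>k. (B * norm z) * g k) summable_on UNIV" using gs by (rule summable_on_cmult_right)
    fix k :: int
    have "norm (v k) = norm (lam k) * norm (b k) * norm z powi k * norm z"
      using z0 by (simp add: v_def norm_mult norm_power_int power_int_add_1)
    also have "\<dots> \<le> B * (norm (a k) + norm (b k)) * norm z powi k * norm z"
      by (intro mult_right_mono mult_mono B) (use B0 in auto)
    finally show "norm (v k) \<le> (B * norm z) * g k" by (simp add: g_def mult_ac)
  qed auto
  then obtain V where V: "(v has_sum V) UNIV"
    using summable_on_iff_abs_summable_on_complex summable_on_def by blast
  have "(v has_sum V) ((\<lambda>k. k - 1) ` UNIV)"
  proof -
    have "(\<lambda>k::int. k - 1) ` UNIV = UNIV" by (rule surjI[of _ "\<lambda>k. k+1"]) simp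
    then show ?thesis using V by simp
  qed
  hence V': "((\<lambda>k. v (k - 1)) has_sum V) UNIV"
    by (subst (asm) has_sum_reindex) (auto simp: inj_on_def o_def)
  have "((\<lambda>k. u k + v (k-1)) has_sum (U + V)) UNIV" by (rule has_sum_add[OF U V'])
  moreover have "u k + v (k-1) = (lam k * a k + lam (k-1) * b (k-1)) * z powi k" for k
    by (simp add: u_def v_def algebra_simps)
  ultimately have res: "((\<lambda>k. (lam k * a k + lam (k-1) * b (k-1)) * z powi k) has_sum (U + V)) UNIV"
    by simp
  have "((\<lambda>k. u k + v k) has_sum (U + V)) UNIV" by (rule has_sum_add[OF U V])
  moreover have "u k + v k = lam k * fblock a b k z" for k
    using z0 by (simp add: u_def v_def fblock_def power_int_add_1 distrib_left distrib_right mult_ac)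
  ultimately have "((\<lambda>k. lam k * fblock a b k z) has_sum (U + V)) UNIV" by simp
  hence "(\<lambda>N. psum a b lam N z) \<longlonglongrightarrow> U + V"
    unfolding psum_def by (rule has_sum_sym_partial)
  hence "series_fun a b lam z = U + V"
    unfolding series_fun_def by (rule limI)
  with res show ?thesis by simp
qed

lemma Icc_int_insert: "(j::int) \<le> n \<Longrightarrow> {j..n} = insert j {j+1..n}"
  by auto

lemma recurrence_zero:
  fixes mu a b :: "int \<Rightarrow> complex"
  assumes a_nz: "\<And>n. a n \<noteq> 0"
    and sup_inf: "(SUP n\<in>{..-1::int}. ereal (norm ((\<Prod>k\<in>{n+1..0}. a k) / (\<Prod>k\<in>{n..-1}. b k)))) = \<infinity>"
    and B: "\<And>k. norm (mu k) \<le> B"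
    and rel: "\<And>k. k \<le> M \<Longrightarrow> mu k * a k + mu (k-1) * b (k-1) = 0"
  shows "mu M = 0"
proof -
  define m where "m = min M 0"
  have mM: "m \<le> M" "m \<le> 0" by (auto simp: m_def)
  define P where "P j = (\<Prod>k\<in>{j+1..0}. a k) / (\<Prod>k\<in>{j..-1}. b k)" for j
  have mu_m: "mu m = 0"
  proof (rule ccontr)
    assume nz: "mu m \<noteq> 0"
    have step: "norm (mu (m - int d)) * norm (\<Prod>k\<in>{m - int d..m-1}. b k)
                = norm (mu m) * norm (\<Prod>k\<in>{m - int d + 1..m}. a k)" for d :: nat
    proof (induction d)
      case 0
      then show ?case by simp
    next
      case (Suc d)
      define j where "j = m - int (Suc d)"
      have j1: "m - int d = j + 1" by (simp add: j_def)
      have e1: "{j..m-1} = insert j {j+1..m-1}" by (rule Icc_int_insert) (simp add: j_def)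
      have e2: "{j+1..m} = insert (j+1) {j+1+1..m}" by (rule Icc_int_insert) (simp add: j_def)
      have "j + 1 \<le> M" using mM by (simp add: j_def)
      from rel[OF this] have r: "mu (j+1) * a (j+1) + mu j * b j = 0" by simp
      hence r': "norm (mu j) * norm (b j) = norm (mu (j+1)) * norm (a (j+1))"
        by (metis add.inverse_unique norm_minus_cancel norm_mult)
      have "norm (mu j) * norm (\<Prod>k\<in>{j..m-1}. b k)
            = (norm (mu j) * norm (b j)) * norm (\<Prod>k\<in>{j+1..m-1}. b k)"
        by (simp add: e1 norm_mult)
      also have "\<dots> = norm (a (j+1)) * (norm (mu (j+1)) * norm (\<Prod>k\<in>{j+1..m-1}. b k))"
        by (simp add: r')
      also have "norm (mu (j+1)) * norm (\<Prod>k\<in>{j+1..m-1}. b k) = norm (mu m) * norm (\<Prod>k\<in>{j+1+1..m}. a k)"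
        using Suc.IH unfolding j1 .
      also have "norm (a (j+1)) * (norm (mu m) * norm (\<Prod>k\<in>{j+1+1..m}. a k)) = norm (mu m) * norm (\<Prod>k\<in>{j+1..m}. a k)"
        by (simp add: e2 norm_mult)
      finally show ?case by (simp add: j_def)
    qed
    define K1 where "K1 = (B / norm (mu m)) * (norm (\<Prod>k\<in>{m+1..0}. a k) / norm (\<Prod>k\<in>{m..-1}. b k))"
    define K2 where "K2 = (\<Sum>i\<in>{m..-1}. norm (P i))"
    have B0: "B \<ge> 0" using B[of 0] norm_ge_zero order_trans by blast
    have K1: "K1 \<ge> 0" using B0 by (simp add: K1_def)
    have K2: "K2 \<ge> 0" by (simp add: K2_def sum_nonneg)
    have bnd: "norm (P j) \<le> K1 + K2" if j: "j \<le> -1" for j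
    proof (cases "j < m")
      case False
      then have "norm (P j) \<le> K2" unfolding K2_def
        by (intro member_le_sum) (use j in auto)
      then show ?thesis using K1 by simp
    next
      case True
      define d where "d = nat (m - j)"
      have jd: "j = m - int d" using True by (simp add: d_def)
      define A1 where "A1 = (\<Prod>k\<in>{j+1..m}. a k)"
      define A2 where "A2 = (\<Prod>k\<in>{m+1..0}. a k)"
      define B1 where "B1 = (\<Prod>k\<in>{j..m-1}. b k)"
      define B2 where "B2 = (\<Prod>k\<in>{m..-1}. b k)"
      have sA: "(\<Prod>k\<in>{j+1..0}. a k) = A1 * A2"
      proof -
        have "{j+1..0} = {j+1..m} \<union> {m+1..0}" using True mM by auto
        then show ?thesis unfolding A1_def A2_def by (simp add: prod.union_disjoint[symmetric] ivl_disj_int)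
      qed
      have sB: "(\<Prod>k\<in>{j..-1}. b k) = B1 * B2"
      proof -
        have "{j..-1} = {j..m-1} \<union> {m..-1}" using True mM by auto
        then show ?thesis unfolding B1_def B2_def by (simp add: prod.union_disjoint[symmetric] ivl_disj_int)
      qed
      have st: "norm (mu j) * norm B1 = norm (mu m) * norm A1"
        using step[of d] unfolding A1_def B1_def jd by simp
      have PA: "norm (P j) = (norm A1 / norm B1) * (norm A2 / norm B2)"
        by (simp add: P_def sA sB norm_mult norm_divide)
      show ?thesis
      proof (cases "B1 = 0")
        case True
        then have "norm (P j) = 0" using PA by simp
        then show ?thesis using K1 K2 by simp
      next
        case False
        have "norm A1 / norm B1 = norm (mu j) / norm (mu m)"
          using st False nz by (simp add: field_simps)
        also have "\<dots> \<le> B / norm (mu m)"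
          using B[of j] nz by (simp add: divide_right_mono)
        finally have "norm (P j) \<le> (B / norm (mu m)) * (norm A2 / norm B2)"
          unfolding PA by (rule mult_right_mono) simp
        then show ?thesis using K2 by (simp add: K1_def A2_def B2_def)
      qed
    qed
    have "(SUP n\<in>{..-1::int}. ereal (norm (P n))) \<le> ereal (K1 + K2)"
      by (rule SUP_least) (use bnd in auto)
    then show False using sup_inf by (simp add: P_def)
  qed
  have up: "m + int d \<le> M \<Longrightarrow> mu (m + int d) = 0" for d :: nat
  proof (induction d)
    case 0
    then show ?case using mu_m by simp
  next
    case (Suc d)
    have "mu (m + int (Suc d)) * a (m + int (Suc d)) + mu (m + int d) * b (m + int d) = 0"
      using rel[of "m + int (Suc d)"] Suc.prems by simp
    then have "mu (m + int (Suc d)) * a (m + int (Suc d)) = 0" using Suc by simp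
    then show ?case using a_nz by simp
  qed
  have "M = m + int (nat (M - m))" using mM by simp
  then show ?thesis using up[of "nat (M - m)"] by simp
qed

lemma coeff_unique:
  fixes c c' :: "int \<Rightarrow> complex"
  assumes \<rho>: "\<rho> > 0"
    and h1: "\<And>z. norm z = \<rho> \<Longrightarrow> ((\<lambda>k. c k * z powi k) has_sum f z) UNIV"
    and h2: "\<And>z. norm z = \<rho> \<Longrightarrow> ((\<lambda>k. c' k * z powi k) has_sum f z) UNIV"
  shows "c = c'"
proof
  fix m
  have "(\<lambda>k. c k - c' k) m = 0"
  proof (rule laurent_unique0[OF \<rho>])
    fix z :: complex assume z: "norm z = \<rho>"
    have "((\<lambda>k. c k * z powi k + - (c' k * z powi k)) has_sum (f z + - f z)) UNIV"
      using h2[OF z] by (intro has_sum_add[OF h1[OF z]]) (simp add: has_sum_uminus)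
    then show "((\<lambda>k. (c k - c' k) * z powi k) has_sum 0) UNIV"
      by (simp add: algebra_simps)
  qed
  then show "c m = c' m" by simp
qed

lemma laurent_coeff_eq:
  fixes c :: "int \<Rightarrow> complex"
  assumes \<rho>: "\<rho> > 0" and circ: "\<And>z. norm z = \<rho> \<Longrightarrow> z \<in> \<Omega>"
    and h: "\<And>z. z \<in> \<Omega> \<Longrightarrow> ((\<lambda>k. c k * z powi k) has_sum f z) UNIV"
  shows "laurent_coeff \<Omega> f = c"
  unfolding laurent_coeff_def
proof (rule the_equality)
  show "\<forall>z\<in>\<Omega>. ((\<lambda>k. c k * z powi k) has_sum f z) UNIV" using h by blast
  fix c' assume "\<forall>z\<in>\<Omega>. ((\<lambda>k. c' k * z powi k) has_sum f z) UNIV"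
  then show "c' = c"
    using coeff_unique[OF \<rho>, of c' f c] circ h by blast
qed

lemma main_generic:
  fixes S :: "(int \<Rightarrow> complex) \<Rightarrow> bool" and Nm :: "(int \<Rightarrow> complex) \<Rightarrow> real"
    and a b w :: "int \<Rightarrow> complex"
  assumes a_nz: "\<And>n. a n \<noteq> 0"
    and sup_inf: "(SUP n\<in>{..-1::int}. ereal (norm ((\<Prod>k\<in>{n+1..0}. a k) / (\<Prod>k\<in>{n..-1}. b k)))) = \<infinity>"
    and invR_fin: "inv_outer_rad a b \<noteq> \<infinity>"
    and r_lt_R: "inner_rad a b < outer_rad a b"
    and Sdelta: "\<And>n. S (\<lambda>k. if k = n then 1 else 0)"
    and Ndelta: "\<And>n. Nm (\<lambda>k. if k = n then 1 else 0) = 1"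
    and Sbdd: "\<And>lam. S lam \<Longrightarrow> \<exists>B. \<forall>k. norm (lam k) \<le> B"
    and Scoef: "\<And>lam k. S lam \<Longrightarrow> norm (lam k) \<le> Nm lam"
    and bw: "Bw_bounded a b S Nm w"
  shows "bounded (range (\<lambda>n. w (n+1) * a (n+1) / a n))
       \<and> bounded (range (\<lambda>n. w (n+1) * b n / a n - w n * b (n-1) / a (n-1)))"
proof -
  obtain C where C: "\<And>lam. S lam \<Longrightarrow> (\<exists>mu. S mu \<and> Nm mu \<le> C * Nm lam \<and>
          (\<forall>z\<in>annulus a b.
             ((\<lambda>n. w n * laurent_coeff (annulus a b) (series_fun a b lam) n * z powi (n - 1))
                has_sum series_fun a b mu z) UNIV))"
    using bw unfolding Bw_bounded_def by blast
  obtain \<rho> where \<rho>: "\<rho> > 0" and circ: "\<And>z. norm z = \<rho> \<Longrightarrow> z \<in> annulus a b"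
    using annulus_circle[OF r_lt_R] by blast
  have key: "norm (w n * a n / a (n-1)) \<le> C \<and> norm (w (n+1) * b n / a n - w n * b (n-1) / a (n-1)) \<le> C" for n
  proof -
    define \<delta> where "\<delta> = (\<lambda>k::int. if k = n then (1::complex) else 0)"
    define L where "L k = \<delta> k * a k + \<delta> (k-1) * b (k-1)" for k
    have \<delta>B: "norm (\<delta> k) \<le> 1" for k by (simp add: \<delta>_def)
    have LC: "laurent_coeff (annulus a b) (series_fun a b \<delta>) = L"
    proof (rule laurent_coeff_eq[OF \<rho> circ])
      fix z assume "z \<in> annulus a b"
      then show "((\<lambda>k. L k * z powi k) has_sum series_fun a b \<delta> z) UNIV"
        unfolding L_def by (rule series_coeffs[OF _ invR_fin \<delta>B])
    qed
    have "S \<delta>" using Sdelta[of n] unfolding \<delta>_def .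
    from C[OF this] obtain mu where mu: "S mu" "Nm mu \<le> C * Nm \<delta>"
      and hs0: "\<forall>z\<in>annulus a b. ((\<lambda>k. w k * laurent_coeff (annulus a b) (series_fun a b \<delta>) k * z powi (k - 1)) has_sum series_fun a b mu z) UNIV"
      by blast
    have hs: "\<And>z. z \<in> annulus a b \<Longrightarrow> ((\<lambda>k. w k * L k * z powi (k - 1)) has_sum series_fun a b mu z) UNIV"
      using hs0 unfolding LC by blast
    have NmuC: "Nm mu \<le> C" using mu(2) Ndelta[of n] by (simp add: \<delta>_def)
    obtain Bm where Bm: "\<And>k. norm (mu k) \<le> Bm" using Sbdd[OF mu(1)] by blast
    define d where "d k = mu k * a k + mu (k-1) * b (k-1)" for k
    define e where "e k = w (k+1) * L (k+1)" for k
    have hd: "((\<lambda>k. d k * z powi k) has_sum series_fun a b mu z) UNIV" if "z \<in> annulus a b" for z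
      unfolding d_def by (rule series_coeffs[OF that invR_fin Bm])
    have he: "((\<lambda>k. e k * z powi k) has_sum series_fun a b mu z) UNIV" if "z \<in> annulus a b" for z
    proof -
      have surj: "range (\<lambda>k::int. k + 1) = UNIV" by (rule surjI[of _ "\<lambda>k. k - 1"]) simp
      have "((\<lambda>k. w k * L k * z powi (k - 1)) has_sum series_fun a b mu z) (range (\<lambda>k::int. k + 1))"
        using hs[OF that] surj by simp
      then have "(((\<lambda>k. w k * L k * z powi (k - 1)) \<circ> (\<lambda>k. k + 1)) has_sum series_fun a b mu z) UNIV"
        by (subst (asm) has_sum_reindex) (auto simp: inj_on_def)
      then show ?thesis by (simp add: e_def o_def)
    qed
    have de: "d = e" using coeff_unique[OF \<rho>, of d "series_fun a b mu" e] hd he circ by blast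
    have "mu (n-2) = 0"
    proof (rule recurrence_zero[OF a_nz sup_inf Bm])
      fix k assume "k \<le> n - 2"
      then have "e k = 0" by (simp add: e_def L_def \<delta>_def)
      then show "mu k * a k + mu (k-1) * b (k-1) = 0" using de by (simp add: d_def[symmetric])
    qed
    moreover have "d (n-1) = e (n-1)" "d n = e n" using de by auto
    ultimately have m1: "mu (n-1) * a (n-1) = w n * a n"
      and m2: "mu n * a n + mu (n-1) * b (n-1) = w (n+1) * b n"
      by (simp_all add: d_def e_def L_def \<delta>_def)
    have mu1: "mu (n-1) = w n * a n / a (n-1)" using m1 a_nz[of "n-1"] by (simp add: field_simps)
    have mu2: "mu n = w (n+1) * b n / a n - w n * b (n-1) / a (n-1)"
      using m2 a_nz[of n] a_nz[of "n-1"] unfolding mu1 by (simp add: field_simps)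
    show ?thesis
      using Scoef[OF mu(1), of "n-1"] Scoef[OF mu(1), of n] NmuC mu1 mu2 by simp
  qed
  show ?thesis
  proof
    show "bounded (range (\<lambda>n. w (n+1) * a (n+1) / a n))"
      unfolding bounded_iff
    proof (intro exI ballI)
      fix x assume "x \<in> range (\<lambda>n. w (n+1) * a (n+1) / a n)"
      then obtain n where "x = w (n+1) * a (n+1) / a n" by blast
      then show "norm x \<le> C" using key[of "n+1", THEN conjunct1] by simp
    qed
    show "bounded (range (\<lambda>n. w (n+1) * b n / a n - w n * b (n-1) / a (n-1)))"
      unfolding bounded_iff using key[THEN conjunct2] by blast
  qed
qed

lemma psum_delta:
  assumes "N \<ge> nat \<bar>n\<bar>"
  shows "psum a b (\<lambda>k. if k = n then 1 else 0) N z = fblock a b n z"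
proof -
  have "n \<in> {- int N..int N}" using assms by auto
  have "psum a b (\<lambda>k. if k = n then 1 else 0) N z = (\<Sum>k\<in>{-int N..int N}. if k = n then fblock a b k z else 0)"
    unfolding psum_def by (rule sum.cong) auto
  then show ?thesis using \<open>n \<in> {- int N..int N}\<close> by simp
qed

lemma series_fun_delta: "series_fun a b (\<lambda>k. if k = n then 1 else 0) z = fblock a b n z"
proof -
  have "(\<lambda>N. psum a b (\<lambda>k. if k = n then 1 else 0) N z) \<longlonglongrightarrow> fblock a b n z"
    by (rule tendsto_eventually, rule eventually_mono[OF eventually_ge_at_top[of "nat \<bar>n\<bar>"]])
       (rule psum_delta)
  then show ?thesis unfolding series_fun_def by (rule limI)
qed

lemma luc_delta: "loc_unif_conv a b (\<lambda>k. if k = n then 1 else 0)"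
  unfolding loc_unif_conv_def
proof (intro allI impI)
  fix K :: "complex set"
  show "uniform_limit K (psum a b (\<lambda>k. if k = n then 1 else 0)) (series_fun a b (\<lambda>k. if k = n then 1 else 0)) sequentially"
    unfolding uniform_limit_iff
  proof (intro allI impI)
    fix e :: real assume e: "e > 0"
    show "\<forall>\<^sub>F N in sequentially. \<forall>x\<in>K. dist (psum a b (\<lambda>k. if k = n then 1 else 0) N x) (series_fun a b (\<lambda>k. if k = n then 1 else 0) x) < e"
      by (rule eventually_mono[OF eventually_ge_at_top[of "nat \<bar>n\<bar>"]])
         (use e in \<open>simp add: psum_delta series_fun_delta\<close>)
  qed
qed

lemma delta_powr: "(\<lambda>k. norm (if k = n then (1::complex) else 0) powr p) = (\<lambda>k. if k = n then 1 else 0)"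
  by (rule ext) simp

lemma lp_delta: "lp_coeffs p a b (\<lambda>k. if k = n then 1 else 0)"
proof -
  have "((\<lambda>k. if k = n then (1::real) else 0) has_sum 1) UNIV"
    by (rule has_sum_finite_neutralI[of "{n}"]) auto
  then show ?thesis unfolding lp_coeffs_def delta_powr using luc_delta summable_on_def by blast
qed

lemma lp_norm_delta: "lp_norm p (\<lambda>k. if k = n then 1 else 0) = 1"
proof -
  have "((\<lambda>k. if k = n then (1::real) else 0) has_sum 1) UNIV"
    by (rule has_sum_finite_neutralI[of "{n}"]) auto
  then have "infsum (\<lambda>k. if k = n then (1::real) else 0) UNIV = 1" by (rule infsumI)
  then show ?thesis unfolding lp_norm_def delta_powr by simp
qed

lemma lp_coef:
  assumes "lp_coeffs p a b lam" "p > 0"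
  shows "norm (lam k) \<le> lp_norm p lam"
proof -
  have s: "(\<lambda>n. norm (lam n) powr p) summable_on UNIV" using assms(1) by (simp add: lp_coeffs_def)
  have "infsum (\<lambda>n. norm (lam n) powr p) {k} \<le> infsum (\<lambda>n. norm (lam n) powr p) UNIV"
    by (rule infsum_mono_neutral) (use s in auto)
  then have le: "norm (lam k) powr p \<le> infsum (\<lambda>n. norm (lam n) powr p) UNIV" by simp
  have "norm (lam k) = (norm (lam k) powr p) powr (1/p)"
    using assms(2) by (simp add: powr_powr)
  also have "\<dots> \<le> lp_norm p lam"
    unfolding lp_norm_def by (rule powr_mono2) (use assms(2) le in auto)
  finally show ?thesis .
qed

lemma c0_delta: "c0_coeffs a b (\<lambda>k. if k = n then 1 else 0)"
proof -
  have t: "((\<lambda>k. if k = n then (1::complex) else 0) \<longlongrightarrow> 0) at_top"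
    by (rule tendsto_eventually, rule eventually_mono[OF eventually_gt_at_top[of n]]) auto
  have "eventually (\<lambda>k. k < n) (at_bot :: int filter)"
    unfolding eventually_at_bot_linorder by (rule exI[of _ "n - 1"]) auto
  then have b: "((\<lambda>k. if k = n then (1::complex) else 0) \<longlongrightarrow> 0) at_bot"
    by (rule tendsto_eventually[OF eventually_mono]) auto
  show ?thesis unfolding c0_coeffs_def using t b luc_delta by blast
qed

lemma sup_norm_delta: "sup_norm (\<lambda>k. if k = n then 1 else 0) = 1"
  unfolding sup_norm_def
  by (rule cSup_eq_maximum) (auto intro!: image_eqI[of _ _ n])

lemma c0_bdd:
  assumes "c0_coeffs a b lam"
  shows "\<exists>B. \<forall>k. norm (lam k) \<le> B"
proof -
  have t: "(lam \<longlongrightarrow> 0) at_top" and bt: "(lam \<longlongrightarrow> 0) at_bot" using assms by (auto simp: c0_coeffs_def)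
  have "eventually (\<lambda>k. dist (lam k) 0 < 1) at_top" using tendstoD[OF t] by simp
  then obtain K1 where K1: "\<And>k. k \<ge> K1 \<Longrightarrow> norm (lam k) < 1"
    unfolding eventually_at_top_linorder by auto
  have "eventually (\<lambda>k. dist (lam k) 0 < 1) at_bot" using tendstoD[OF bt] by simp
  then obtain K2 where K2: "\<And>k. k \<le> K2 \<Longrightarrow> norm (lam k) < 1"
    unfolding eventually_at_bot_linorder by auto
  have "norm (lam k) \<le> 1 + (\<Sum>i\<in>{K2..K1}. norm (lam i))" for k
  proof (cases "k \<ge> K1 \<or> k \<le> K2")
    case True
    then have "norm (lam k) < 1" using K1 K2 by blast
    moreover have "(\<Sum>i\<in>{K2..K1}. norm (lam i)) \<ge> 0" by (simp add: sum_nonneg)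
    ultimately show ?thesis by linarith
  next
    case False
    then have "norm (lam k) \<le> (\<Sum>i\<in>{K2..K1}. norm (lam i))"
      by (intro member_le_sum) auto
    then show ?thesis by linarith
  qed
  then show ?thesis by blast
qed

lemma c0_coef:
  assumes "c0_coeffs a b lam"
  shows "norm (lam k) \<le> sup_norm lam"
proof -
  obtain B where B: "\<And>k. norm (lam k) \<le> B" using c0_bdd[OF assms] by blast
  have "bdd_above (range (\<lambda>k. norm (lam k)))" by (rule bdd_aboveI2[OF B])
  then show ?thesis unfolding sup_norm_def by (rule cSUP_upper[OF UNIV_I])
qed

theorem proposition3p2:
  fixes a b w :: "int \<Rightarrow> complex" and p :: real
  assumes a_nz: "\<And>n. a n \<noteq> 0"
    and sup_inf: "(SUP n\<in>{..-1::int}. ereal (norm ((\<Prod>k\<in>{n+1..0}. a k) / (\<Prod>k\<in>{n..-1}. b k)))) = \<infinity>"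
    and invR_fin: "inv_outer_rad a b \<noteq> \<infinity>"
    and r_lt_R: "inner_rad a b < outer_rad a b"
    and p: "1 \<le> p"
  shows "(contains_laurent_polys a b (lp_coeffs p a b) \<and> Bw_bounded a b (lp_coeffs p a b) (lp_norm p) w
            \<longrightarrow> bounded (range (\<lambda>n. w (n+1) * a (n+1) / a n))
              \<and> bounded (range (\<lambda>n. w (n+1) * b n / a n - w n * b (n-1) / a (n-1))))
       \<and> (contains_laurent_polys a b (c0_coeffs a b) \<and> Bw_bounded a b (c0_coeffs a b) sup_norm w
            \<longrightarrow> bounded (range (\<lambda>n. w (n+1) * a (n+1) / a n))
              \<and> bounded (range (\<lambda>n. w (n+1) * b n / a n - w n * b (n-1) / a (n-1))))"
proof (rule conjI; rule impI)
  assume h: "contains_laurent_polys a b (lp_coeffs p a b) \<and> Bw_bounded a b (lp_coeffs p a b) (lp_norm p) w"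
  have p0: "p > 0" using p by simp
  show "bounded (range (\<lambda>n. w (n+1) * a (n+1) / a n))
              \<and> bounded (range (\<lambda>n. w (n+1) * b n / a n - w n * b (n-1) / a (n-1)))"
  proof (rule main_generic[where S="lp_coeffs p a b" and Nm="lp_norm p", OF a_nz sup_inf invR_fin r_lt_R])
    show "Bw_bounded a b (lp_coeffs p a b) (lp_norm p) w" using h by blast
    show "\<And>lam. lp_coeffs p a b lam \<Longrightarrow> \<exists>B. \<forall>k. norm (lam k) \<le> B"
      using lp_coef[OF _ p0] by blast
    show "\<And>n. lp_coeffs p a b (\<lambda>k. if k = n then 1 else 0)" by (rule lp_delta)
    show "\<And>n. lp_norm p (\<lambda>k. if k = n then 1 else 0) = 1" by (rule lp_norm_delta)
    show "\<And>lam k. lp_coeffs p a b lam \<Longrightarrow> norm (lam k) \<le> lp_norm p lam" using lp_coef[OF _ p0] by blast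
  qed
next
  assume h: "contains_laurent_polys a b (c0_coeffs a b) \<and> Bw_bounded a b (c0_coeffs a b) sup_norm w"
  show "bounded (range (\<lambda>n. w (n+1) * a (n+1) / a n))
              \<and> bounded (range (\<lambda>n. w (n+1) * b n / a n - w n * b (n-1) / a (n-1)))"
  proof (rule main_generic[where S="c0_coeffs a b" and Nm="sup_norm", OF a_nz sup_inf invR_fin r_lt_R])
    show "Bw_bounded a b (c0_coeffs a b) sup_norm w" using h by blast
    show "\<And>n. c0_coeffs a b (\<lambda>k. if k = n then 1 else 0)" by (rule c0_delta)
    show "\<And>n. sup_norm (\<lambda>k. if k = n then 1 else 0) = 1" by (rule sup_norm_delta)
    show "\<And>lam. c0_coeffs a b lam \<Longrightarrow> \<exists>B. \<forall>k. norm (lam k) \<le> B" by (rule c0_bdd)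
    show "\<And>lam k. c0_coeffs a b lam \<Longrightarrow> norm (lam k) \<le> sup_norm lam" by (rule c0_coef)
  qed
qed

end
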